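(* Let $X_1,X_2,\ldots$ be i.i.d. Rademacher random variables ($\mathbb{P}(X_i=1)=\mathbb{P}(X_i=-1)=1/2$), $S_0=0$, and $S_i=S_{i-1}+X_i$ (the simple symmetric random walk). Let $\alpha\ge1$ and $1/\beta=(\alpha-1)/\alpha$. For $i\ge1$ and $x\in\mathrm{supp}(S_{i-1})$, $$2^{\frac1\beta\left(-1+i\left(1-h_2\left(\frac{i+1}{2i}\right)\right)+\frac12\log_2\left(\frac\pi2\cdot\frac{i^2-1}{i}\right)\right)}\le H_\alpha^{1/\alpha}\left(\mathcal{P}_{S_i|S_{i-1}=x}\,\middle\|\,\mathcal{P}_{S_i}\right)\le 2^{\frac{i}{\beta}-1+\frac1\alpha},$$ where $h_2(x)=-x\log_2x-(1-x)\log_2(1-x)$ is the binary entropy. Consequently, for $n\ge2$, $$\frac{n-2}{4\beta}\le\log_2 H_\alpha^{1/\alpha}\left(\mathcal{P}_{S^n}\,\middle\|\,\mathcal{P}_{\bigotimes_{j=1}^n S_j}\right)\le\frac{n(n-1)}{2\beta}.$$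
   Context: For probability measures $\nu\ll\mu$, $H_\alpha(\nu\|\mu)=\int(d\nu/d\mu)^\alpha d\mu$. $\mathcal{P}_{S^n}$ is the joint law of $(S_1,\ldots,S_n)$, $\mathcal{P}_{S_i}$ the law of $S_i$, $\mathcal{P}_{S_i|S_{i-1}=x}$ the conditional law of $S_i$ given $S_{i-1}=x$, and $\mathcal{P}_{\bigotimes_{j=1}^n S_j}$ the product of the marginal laws of $S_1,\ldots,S_n$. *)

theory Defs
  imports "HOL-Probability.Probability"
begin

definition rademacher :: "int pmf" where
  "rademacher = pmf_of_set {-1, 1}"

text \<open>Joint law of the i.i.d. steps; index k < n stands for X_(k+1).\<close>
definition steps :: "nat \<Rightarrow> (nat \<Rightarrow> int) pmf" where
  "steps n = Pi_pmf {..<n} 0 (\<lambda>_. rademacher)"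

definition walk :: "(nat \<Rightarrow> int) \<Rightarrow> nat \<Rightarrow> int" where
  "walk X j = (\<Sum>k<j. X k)"

definition S_law :: "nat \<Rightarrow> int pmf" where
  "S_law i = map_pmf (\<lambda>X. walk X i) (steps i)"

definition cond_step_law :: "nat \<Rightarrow> int \<Rightarrow> int pmf" where
  "cond_step_law i x =
     map_pmf snd (cond_pmf (map_pmf (\<lambda>X. (walk X (i - 1), walk X i)) (steps i)) {p. fst p = x})"

definition joint_law :: "nat \<Rightarrow> (nat \<Rightarrow> int) pmf" where
  "joint_law n = map_pmf (\<lambda>X j. if j \<in> {1..n} then walk X j else 0) (steps n)"

definition prod_marg_law :: "nat \<Rightarrow> (nat \<Rightarrow> int) pmf" where
  "prod_marg_law n = Pi_pmf {1..n} 0 (\<lambda>j. S_law j)"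

definition H_div :: "real \<Rightarrow> 'a measure \<Rightarrow> 'a measure \<Rightarrow> real" where
  "H_div \<alpha> \<nu> \<mu> = (\<integral>x. (enn2real (RN_deriv \<mu> \<nu> x)) powr \<alpha> \<partial>\<mu>)"

definition h2 :: "real \<Rightarrow> real" where
  "h2 x = - x * log 2 x - (1 - x) * log 2 (1 - x)"

end

theory Submission
  imports Defs
begin


lemma set_rademacher[simp]: "set_pmf rademacher = {-1, 1}"
  unfolding rademacher_def by simp

lemma pmf_rademacher: "pmf rademacher y = (if y \<in> {-1,1} then 1/2 else 0)"
  unfolding rademacher_def by (simp add: pmf_of_set)

lemma steps_Suc: "steps (Suc n) = map_pmf (\<lambda>(y,f). f(n:=y)) (pair_pmf rademacher (steps n))"
proof -
  have "{..<Suc n} = insert n {..<n}" by auto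
  then show ?thesis unfolding steps_def by (simp add: Pi_pmf_insert)
qed

lemma walk_upd_Suc: "walk (f(n:=y)) (Suc n) = walk f n + y"
  unfolding walk_def by (simp add: sum.lessThan_Suc)

lemma walk_upd: "walk (f(n:=y)) n = walk f n"
  unfolding walk_def by (intro sum.cong) auto

lemma walk_Suc: "walk X (Suc n) = walk X n + X n"
  unfolding walk_def by simp

lemma S_law_Suc: "S_law (Suc n) = map_pmf (\<lambda>(y,s). s + y) (pair_pmf rademacher (S_law n))"
  unfolding S_law_def steps_Suc pair_map_pmf2 map_pmf_comp
  by (intro map_pmf_cong) (auto simp: walk_upd_Suc)

lemma J_Suc: "map_pmf (\<lambda>X. (walk X (Suc n - 1), walk X (Suc n))) (steps (Suc n))
     = map_pmf (\<lambda>(y,s). (s, s + y)) (pair_pmf rademacher (S_law n))"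
  unfolding S_law_def steps_Suc pair_map_pmf2 map_pmf_comp
  by (intro map_pmf_cong) (auto simp: walk_upd_Suc walk_upd)

lemma set_S_law_Suc: "set_pmf (S_law (Suc n)) = {s + y |s y. s \<in> set_pmf (S_law n) \<and> y \<in> {-1,1}}"
  unfolding S_law_Suc by auto

lemma cond_step_law_eq:
  assumes "x \<in> set_pmf (S_law n)"
  shows "cond_step_law (Suc n) x = map_pmf (\<lambda>y. x + y) rademacher"
proof -
  let ?J = "map_pmf (\<lambda>(y,s). (s, s + y)) (pair_pmf rademacher (S_law n))"
  have inj: "inj (\<lambda>(y::int,s::int). (s, s + y))" by (auto simp: inj_def)
  have inj2: "inj (\<lambda>y::int. (x, x + y))" by (auto simp: inj_def)
  have pJ: "pmf ?J (a,b) = pmf rademacher (b - a) * pmf (S_law n) a" for a b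
  proof -
    have "pmf ?J ((\<lambda>(y,s). (s, s + y)) (b - a, a)) = pmf (pair_pmf rademacher (S_law n)) (b - a, a)"
      by (rule pmf_map_inj'[OF inj])
    then have "pmf ?J (a,b) = pmf (pair_pmf rademacher (S_law n)) (b - a, a)"
      by simp
    then show ?thesis by (simp add: pmf_pair)
  qed
  have mJ: "measure_pmf.prob ?J {p. fst p = x} = pmf (S_law n) x"
  proof -
    have "measure_pmf.prob ?J {p. fst p = x} = measure_pmf.prob (map_pmf fst ?J) {x}"
      by (simp add: vimage_def)
    also have "map_pmf fst ?J = map_pmf snd (pair_pmf rademacher (S_law n))"
      by (simp add: map_pmf_comp case_prod_beta')
    also have "\<dots> = S_law n" by (rule map_snd_pair_pmf)
    finally show ?thesis by (simp add: measure_pmf_single)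
  qed
  have pos: "pmf (S_law n) x > 0" using assms by (simp add: pmf_positive)
  have ne: "set_pmf ?J \<inter> {p. fst p = x} \<noteq> {}"
  proof -
    have "(1::int, x) \<in> set_pmf (pair_pmf rademacher (S_law n))" using assms by simp
    then have "(\<lambda>(y,s). (s, s + y)) (1::int, x) \<in> (\<lambda>(y,s). (s, s + y)) ` set_pmf (pair_pmf rademacher (S_law n))"
      by (rule imageI)
    then have "(x, x + 1) \<in> set_pmf ?J" by (simp only: set_map_pmf) simp
    then have "(x, x + 1) \<in> set_pmf ?J \<inter> {p. fst p = x}" by simp
    then show ?thesis by blast
  qed
  have "cond_pmf ?J {p. fst p = x} = map_pmf (\<lambda>y. (x, x + y)) rademacher"
  proof (rule pmf_eqI)
    fix z :: "int \<times> int"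
    obtain a b where z: "z = (a,b)" by force
    show "pmf (cond_pmf ?J {p. fst p = x}) z = pmf (map_pmf (\<lambda>y. (x, x + y)) rademacher) z"
    proof (cases "a = x")
      case True
      have "pmf (map_pmf (\<lambda>y. (x, x + y)) rademacher) ((\<lambda>y. (x, x + y)) (b - x)) = pmf rademacher (b - x)"
        by (rule pmf_map_inj'[OF inj2])
      then have r: "pmf (map_pmf (\<lambda>y. (x, x + y)) rademacher) (a,b) = pmf rademacher (b - x)"
        using True by simp
      have "pmf (cond_pmf ?J {p. fst p = x}) (a,b) = pmf rademacher (b - a) * pmf (S_law n) a / pmf (S_law n) x"
        using True unfolding pmf_cond[OF ne] pJ mJ by simp
      then show ?thesis using True pos unfolding z r by simp
    next
      case False
      have "pmf (map_pmf (\<lambda>y. (x, x + y)) rademacher) (a,b) = 0"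
        using False by (auto simp: set_pmf_eq[symmetric] pmf_eq_0_set_pmf)
      then show ?thesis using False unfolding z
        by (simp add: pmf_cond[OF ne])
    qed
  qed
  then show ?thesis
    unfolding cond_step_law_def J_Suc by (simp add: map_pmf_comp)
qed


lemma rademacher_bern: "rademacher = map_pmf (\<lambda>b. if b then 1 else -1) (bernoulli_pmf (1/2))"
proof -
  have "map_pmf (\<lambda>b. if b then (1::int) else -1) (pmf_of_set UNIV) = pmf_of_set ((\<lambda>b. if b then (1::int) else -1) ` UNIV)"
    by (intro map_pmf_of_set_inj) (auto simp: inj_on_def)
  moreover have "(\<lambda>b. if b then (1::int) else -1) ` UNIV = {-1, 1}" by (auto simp: UNIV_bool)
  ultimately show ?thesis unfolding rademacher_def bernoulli_pmf_half_conv_pmf_of_set by simp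
qed

lemma S_law_binomial: "S_law n = map_pmf (\<lambda>k. 2 * int k - int n) (binomial_pmf n (1/2))"
proof (induction n)
  case 0
  have a: "S_law 0 = return_pmf 0"
    unfolding S_law_def walk_def by simp
  have "set_pmf (map_pmf (\<lambda>k. 2 * int k - int 0) (binomial_pmf 0 (1/2))) \<subseteq> {0}"
    by auto
  then show ?case unfolding a by (metis set_pmf_subset_singleton)
next
  case (Suc n)
  show ?case
    unfolding S_law_Suc Suc.IH rademacher_bern binomial_pmf_Suc[of "1/2" n, simplified]
    by (simp add: map_pmf_def pair_pmf_def bind_assoc_pmf bind_return_pmf algebra_simps;
        intro bind_pmf_cong refl; simp)
qed


lemma H1: "(a::real)>0 \<Longrightarrow> a * W * ((a+1)/a)^2 = (a+2) * (W * ((a+1)^2 / (a*(a+2))))"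
proof -
  assume a: "a > 0"
  have p: "a*a + a*2 > 0" using a by (simp add: add_pos_pos)
  have "(a+2) * (W * ((a+1)^2 / (a*(a+2)))) = W * (a+1)^2 / a" using a p by (simp add: field_simps)
  moreover have "a * W * ((a+1)/a)^2 = W * (a+1)^2 / a" using a by (simp add: field_simps power2_eq_square)
  ultimately show ?thesis by simp
qed

lemma H3: "(x::real) \<ge> 0 \<Longrightarrow> 4*(x+1)^2/((2*x+1)*(x+5/4)) \<le> (2*x+1)/(x+1/4)"
proof -
  assume x: "x \<ge> 0"
  show ?thesis using x by (simp add: divide_simps) (simp add: algebra_simps power2_eq_square power3_eq_cube)
qed

lemma H4: "(b::real) \<noteq> 0 \<Longrightarrow> b * (X/(a*b)) = X/a"
  by (cases "a = 0") (simp_all add: field_simps)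

lemma H2: "(b::real)>0 \<Longrightarrow> (q::real) > 0 \<Longrightarrow> c*(2*b-1)*(2*b)/(b*b)/(4*q) = c/q*(2*b-1)/(2*b)"
  by (simp add: field_simps)

lemma gl: "(x::real) > 0 \<Longrightarrow> (2 + 1/x)/(1 + (1/4)/x) = (2*x+1)/(x+1/4)"
proof -
  assume x: "x > 0"
  have a: "2 + 1/x = (2*x+1)/x" using x by (simp add: field_simps)
  have b: "1 + (1/4)/x = (x+1/4)/x" using x by (simp add: field_simps)
  show ?thesis unfolding a b using x by simp
qed

definition Pc :: "nat \<Rightarrow> real" where "Pc m = real ((2*m) choose m) / 4^m"

lemma Pc_Suc: "Pc (Suc m) = Pc m * (2*m+1) / (2*m+2)"
proof -
  have e: "real ((2*Suc m) choose Suc m) = real ((2*m) choose m) * (2*m+1) * (2*m+2) / ((m+1)*(m+1))"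
  proof -
    have b1: "real ((2*Suc m) choose Suc m) = fact (2*Suc m) / (fact (Suc m) * fact (2*Suc m - Suc m))"
      by (rule binomial_fact) simp
    have b0: "real ((2*m) choose m) = fact (2*m) / (fact m * fact (2*m - m))"
      by (rule binomial_fact) simp
    have f1: "(fact (2*Suc m) :: real) = (2*real m+2)*(2*real m+1)*fact(2*m)"
    proof -
      have "2*Suc m = Suc (Suc (2*m))" by simp
      then show ?thesis by (simp only: fact_Suc) (simp add: algebra_simps)
    qed
    have f2: "(fact (Suc m) :: real) = (real m+1)*fact m" by (simp add: algebra_simps)
    have s1: "2*Suc m - Suc m = Suc m" "2*m - m = m" by auto
    have b1': "real ((2*Suc m) choose Suc m) = (2*real m+2)*(2*real m+1)*fact(2*m) / (((real m+1)*fact m) * ((real m+1)*fact m))"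
      using b1 unfolding s1 f1 f2 .
    have b0': "real ((2*m) choose m) = fact (2*m) / (fact m * fact m)"
      using b0 unfolding s1 .
    have fp: "(fact m :: real) > 0" by simp
    show ?thesis unfolding b1' b0' using fp by (simp add: field_simps)
  qed
  have "Pc (Suc m) = real ((2*m) choose m) * (2*(real m+1)-1)*(2*(real m+1))/((real m+1)*(real m+1))/(4*4^m)"
    unfolding Pc_def e by (simp add: algebra_simps)
  also have "\<dots> = real ((2*m) choose m)/4^m * (2*(real m+1)-1)/(2*(real m+1))"
    by (rule H2) auto
  finally show ?thesis unfolding Pc_def by (simp add: algebra_simps)
qed

lemma Pc_pos: "Pc m > 0" unfolding Pc_def by simp

definition Wp :: "nat \<Rightarrow> real" where "Wp n = (\<Prod>k=1..n. (4*real k^2) / (4*real k^2 - 1))"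

lemma Pc_Wp: "1 / (Pc m)^2 = (2*m+1) * Wp m"
proof (induction m)
  case 0
  then show ?case by (simp add: Pc_def Wp_def)
next
  case (Suc m)
  have w: "Wp (Suc m) = Wp m * (4*(real m+1)^2 / (4*(real m+1)^2 - 1))"
    unfolding Wp_def by (simp add: prod.nat_ivl_Suc' add.commute)
  have p: "Pc m > 0" by (rule Pc_pos)
  have d: "4*(real m+1)^2 - 1 = (2*m+1)*(2*m+3)" by (simp add: algebra_simps power2_eq_square)
  have "1/(Pc (Suc m))^2 = (1/(Pc m)^2) * ((2*m+2)/(2*m+1))^2"
    unfolding Pc_Suc using p by (simp add: field_simps power2_eq_square)
  also have "\<dots> = (2*m+1) * Wp m * ((2*m+2)/(2*m+1))^2" using Suc.IH by simp
  also have "\<dots> = (2 * real (Suc m) + 1) * Wp (Suc m)"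
  proof -
    have "(2*real m+1) * Wp m * ((2*real m+1+1)/(2*real m+1))^2 = (2*real m+1+2) * (Wp m * ((2*real m+1+1)^2 / ((2*real m+1)*(2*real m+1+2))))"
      by (rule H1) auto
    moreover have "4*(real m+1)^2 = (2*real m+1+1)^2" by (simp add: algebra_simps power2_eq_square)
    ultimately show ?thesis unfolding w d by (simp add: algebra_simps)
  qed
  finally show ?case .
qed

lemma Pc_bound: "(Pc m)^2 \<le> 1 / (pi * (m + 1/4))"
proof -
  define U where "U n = (2*real n+1) * Wp n / (real n + 1/4)" for n
  have lim: "U \<longlonglongrightarrow> 2 * (pi/2)"
  proof -
    have a: "(\<lambda>n. (2*real n+1) / (real n + 1/4)) \<longlonglongrightarrow> 2"
    proof -
      have "(\<lambda>n. (2 + 1/real n) / (1 + (1/4)*(1/real n))) \<longlonglongrightarrow> (2 + 0) / (1 + (1/4)*0)"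
        by (intro tendsto_intros lim_1_over_n) auto
      then have "(\<lambda>n. (2 + 1/real n) / (1 + (1/4)/real n)) \<longlonglongrightarrow> 2" by simp
      moreover have "eventually (\<lambda>n. (2 + 1/real n) / (1 + (1/4)/real n) = (2*real n+1) / (real n + 1/4)) sequentially"
        using eventually_gt_at_top[of "0::nat"] by eventually_elim (rule gl, simp)
      ultimately show ?thesis by (rule Lim_transform_eventually)
    qed
    have "(\<lambda>n. (2*real n+1) / (real n + 1/4) * Wp n) \<longlonglongrightarrow> 2 * (pi/2)"
      by (intro tendsto_mult a) (unfold Wp_def, rule wallis)
    then show ?thesis unfolding U_def by (simp add: field_simps)
  qed
  have dec: "decseq U"
  proof (rule decseq_SucI)
    fix n
    have w: "Wp (Suc n) = Wp n * (4*(real n+1)^2 / (4*(real n+1)^2 - 1))"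
      unfolding Wp_def by (simp add: prod.nat_ivl_Suc' add.commute)
    have wp: "Wp n > 0" unfolding Wp_def
    proof (intro prod_pos)
      fix k assume "k \<in> {1..n}"
      then have "real k \<ge> 1" by auto
      then have k2: "real k^2 \<ge> 1" by simp
      then show "0 < 4 * (real k)\<^sup>2 / (4 * (real k)\<^sup>2 - 1)" by (intro divide_pos_pos) (use k2 in linarith)+
    qed
    have d: "4*(real n+1)^2 - 1 = (2*n+1)*(2*n+3)" by (simp add: algebra_simps power2_eq_square)
    have key: "(2*(real n+1)+1) * (4*(real n+1)^2 / ((2*n+1)*(2*n+3))) / (real n + 1 + 1/4)
        \<le> (2*real n+1) / (real n + 1/4)"
    proof -
      have c: "real (2*n+1) = 2*real n+1" "real (2*n+3) = 2*(real n+1)+1" by simp_all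
      have "(2*(real n+1)+1) * (4*(real n+1)^2 / ((2*real n+1)*(2*(real n+1)+1))) = 4*(real n+1)^2 / (2*real n+1)"
        by (rule H4) (simp add: add_pos_pos)
      moreover have "real n + 1 + 1/4 = real n + 5/4" by simp
      ultimately show ?thesis unfolding of_nat_mult c using H3[of "real n"] by (simp add: add.commute)
    qed
    have "U (Suc n) = Wp n * ((2*(real n+1)+1) * (4*(real n+1)^2 / ((2*n+1)*(2*n+3))) / (real n + 1 + 1/4))"
      unfolding U_def w d by (simp add: ac_simps)
    also have "\<dots> \<le> Wp n * ((2*real n+1) / (real n + 1/4))"
      by (rule mult_left_mono[OF key]) (use wp in auto)
    also have "\<dots> = U n" unfolding U_def by simp
    finally show "U (Suc n) \<le> U n" .
  qed
  have "pi \<le> U m" using decseq_ge[OF dec lim] by simp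
  then have "pi * (real m + 1/4) \<le> (2*real m+1) * Wp m" unfolding U_def
    by (simp add: field_simps)
  also have "\<dots> = 1 / (Pc m)^2" by (simp add: Pc_Wp)
  finally have "pi * (real m + 1/4) \<le> 1 / (Pc m)^2" .
  moreover have "Pc m ^2 > 0" using Pc_pos[of m] by simp
  moreover have "pi * (real m + 1/4) > 0" by simp
  ultimately show ?thesis
    by (simp add: field_simps)
qed


lemma set_S_law: "set_pmf (S_law n) = (\<lambda>k. 2*int k - int n) ` {..n}"
  unfolding S_law_binomial by simp

lemma inj_lin: "inj (\<lambda>k::nat. 2*int k - int n)"
  by (auto simp: inj_def)

lemma pmf_S_law: "k \<le> n \<Longrightarrow> pmf (S_law n) (2*int k - int n) = real (n choose k) / 2^n"
proof -
  assume k: "k \<le> n"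
  have "pmf (S_law n) (2*int k - int n) = pmf (binomial_pmf n (1/2)) k"
    unfolding S_law_binomial by (rule pmf_map_inj'[OF inj_lin])
  also have "\<dots> = real (n choose k) * ((1/2)^k * (1/2)^(n-k))" by simp
  also have "(1/2::real)^k * (1/2)^(n-k) = (1/2)^n"
    using k by (simp add: power_add[symmetric])
  finally show ?thesis by (simp add: power_divide)
qed

lemma S_law_cases:
  assumes "y \<in> set_pmf (S_law n)"
  obtains k where "k \<le> n" "y = 2*int k - int n" "pmf (S_law n) y = real (n choose k) / 2^n"
  using assms pmf_S_law unfolding set_S_law by auto

lemma mu_lower: "y \<in> set_pmf (S_law n) \<Longrightarrow> pmf (S_law n) y \<ge> 1/2^n"
proof -
  assume "y \<in> set_pmf (S_law n)"
  then obtain k where k: "k \<le> n" "pmf (S_law n) y = real (n choose k) / 2^n"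
    by (rule S_law_cases)
  have "real (n choose k) \<ge> 1" using k(1) by (simp add: Suc_le_eq)
  then show ?thesis using k(2) by (simp add: divide_right_mono)
qed

lemma mu_odd: "pmf (S_law (2*m+1)) y \<le> Pc (m+1)"
proof (cases "y \<in> set_pmf (S_law (2*m+1))")
  case False
  then have "pmf (S_law (2*m+1)) y = 0" by (simp add: set_pmf_iff)
  then show ?thesis using Pc_pos[of "m+1"] by simp
next
  case True
  then obtain k where k: "k \<le> 2*m+1" "pmf (S_law (2*m+1)) y = real ((2*m+1) choose k) / 2^(2*m+1)"
    by (rule S_law_cases)
  have "(2*m+1) choose k \<le> (2*m+1) choose ((2*m+1) div 2)" by (rule binomial_maximum)
  also have "(2*m+1) div 2 = m" by simp
  finally have b: "(2*m+1) choose k \<le> (2*m+1) choose m" .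
  have s: "(2*m+1) choose (Suc m) = (2*m+1) choose m"
    using binomial_symmetric[of "Suc m" "2*m+1"] by simp
  have c: "(2*(m+1)) choose (m+1) = 2 * ((2*m+1) choose m)"
  proof -
    have "2*(m+1) = Suc (2*m+1)" by simp
    then have "(2*(m+1)) choose (m+1) = ((2*m+1) choose m) + ((2*m+1) choose (Suc m))"
      by simp
    then show ?thesis using s by simp
  qed
  have "Pc (m+1) = real ((2*m+1) choose m) / 2^(2*m+1)"
    unfolding Pc_def c by (simp add: power_mult power_add)
  moreover have "real ((2*m+1) choose k) / 2^(2*m+1) \<le> real ((2*m+1) choose m) / 2^(2*m+1)"
    using b by (simp add: divide_right_mono)
  ultimately show ?thesis using k(2) by simp
qed

lemma mu_even: "pmf (S_law (2*m)) y \<le> Pc m"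
proof (cases "y \<in> set_pmf (S_law (2*m))")
  case False
  then have "pmf (S_law (2*m)) y = 0" by (simp add: set_pmf_iff)
  then show ?thesis using Pc_pos[of "m"] by simp
next
  case True
  then obtain k where k: "k \<le> 2*m" "pmf (S_law (2*m)) y = real ((2*m) choose k) / 2^(2*m)"
    by (rule S_law_cases)
  have b: "(2*m) choose k \<le> (2*m) choose m" by (rule binomial_maximum')
  have "Pc m = real ((2*m) choose m) / 2^(2*m)"
    unfolding Pc_def by (simp add: power_mult)
  moreover have "real ((2*m) choose k) / 2^(2*m) \<le> real ((2*m) choose m) / 2^(2*m)"
    using b by (simp add: divide_right_mono)
  ultimately show ?thesis using k(2) by simp
qed

lemma mu_even_off: assumes "y \<noteq> 0" shows "pmf (S_law (2*m)) y \<le> Pc m * m / (m+1)"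
proof (cases "y \<in> set_pmf (S_law (2*m))")
  case False
  then have "pmf (S_law (2*m)) y = 0" by (simp add: set_pmf_iff)
  then show ?thesis using Pc_pos[of "m"] by simp
next
  case True
  then obtain k where k: "k \<le> 2*m" "y = 2*int k - int (2*m)" "pmf (S_law (2*m)) y = real ((2*m) choose k) / 2^(2*m)"
    by (rule S_law_cases)
  have km: "k \<noteq> m" using k(2) assms by auto
  have b: "(2*m) choose k \<le> (2*m) choose (m+1)"
  proof (cases "k > m")
    case True
    then show ?thesis using k(1) by (intro binomial_antimono) auto
  next
    case False
    then have "k < m" using km by auto
    have "(2*m) choose k = (2*m) choose (2*m - k)" using k(1) by (rule binomial_symmetric)
    also have "\<dots> \<le> (2*m) choose (m+1)" using \<open>k < m\<close> by (intro binomial_antimono) auto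
    finally show ?thesis .
  qed
  have id: "(m+1) * ((2*m) choose (m+1)) = m * ((2*m) choose m)"
  proof -
    have a: "Suc m * ((2*m) choose Suc m) = (2*m) * ((2*m - 1) choose m)" by (rule binomial_absorption)
    have b: "(2*m - m) * ((2*m) choose m) = (2*m) * ((2*m - 1) choose m)" by (rule binomial_absorb_comp)
    have "2*m - m = m" "Suc m = m+1" by auto
    then show ?thesis using a b by metis
  qed
  have id': "real ((2*m) choose (m+1)) = real ((2*m) choose m) * m / (m+1)"
  proof -
    have "real (m+1) * real ((2*m) choose (m+1)) = real m * real ((2*m) choose m)"
      using arg_cong[OF id, of real] by (simp add: algebra_simps)
    then show ?thesis by (simp add: field_simps)
  qed
  have "pmf (S_law (2*m)) y \<le> real ((2*m) choose (m+1)) / 2^(2*m)"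
    using k(3) b by (simp add: divide_right_mono)
  also have "\<dots> = Pc m * m / (m+1)"
    unfolding id' Pc_def by (simp add: power_mult)
  finally show ?thesis .
qed


definition cexp :: "nat \<Rightarrow> real" where
  "cexp i = -1 + real i * (1 - h2 ((real i + 1) / (2 * real i))) + (1/2) * log 2 ((pi / 2) * ((real i ^ 2 - 1) / real i))"

lemma log2_le: "x > 0 \<Longrightarrow> log 2 x \<le> (x - 1) / ln 2"
  unfolding log_def using ln_le_minus_one[of x] by (simp add: divide_right_mono)

lemma Gdist: "(s::real) * (- a * X - b * Y) = -((s*a)*X + (s*b)*Y)"
  by (simp add: algebra_simps)

lemma log2_4: "log 2 (4::real) = 2" using log_pow_cancel[of 2 2] by simp

lemma log2_8: "log 2 (8::real) = 3" using log_pow_cancel[of 2 3] by simp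

lemma half_sum_nonpos: "(a::real) \<le> 0 \<Longrightarrow> b \<le> 0 \<Longrightarrow> 1/2*(a+b) \<le> 0"
  by simp

lemma gen1: "(a::real) \<noteq> 0 \<Longrightarrow> a * (-1/(a^2*c)) = -1/(a*c)"
  by (cases "c = 0") (simp_all add: power2_eq_square field_simps)

lemma gen2: "(b::real) \<noteq> 0 \<Longrightarrow> b/(a*b*c) = 1/(a*c)"
  by (cases "c = 0"; cases "a = 0") (simp_all add: field_simps)

lemma gen3: "(X::real) \<le> a \<Longrightarrow> Y \<le> b \<Longrightarrow> a + b \<le> 0 \<Longrightarrow> 1/2*(X+Y) \<le> 0"
  by (simp add: field_simps)

lemma c_one: "cexp 1 = 0"
  unfolding cexp_def h2_def by (simp add: log_def)

lemma c_odd: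
  assumes m: "m \<ge> 1"
  shows "cexp (2*m+1) \<le> -1 - (1/2) * log 2 (1/(pi*(real m + 5/4)))"
proof -
  define M where "M = real m"
  have M: "M \<ge> 1" using m by (simp add: M_def)
  define lM where "lM = log 2 M"
  define lM1 where "lM1 = log 2 (M+1)"
  define lB where "lB = log 2 (2*M+1)"
  define lD where "lD = log 2 (4*M+5)"
  define lpi where "lpi = log 2 pi"
  have i: "real (2*m+1) = 2*M+1" by (simp add: M_def)
  have p: "(2*M+1+1)/(2*(2*M+1)) = (M+1)/(2*M+1)" using M by (simp add: field_simps)
  have q: "1 - (M+1)/(2*M+1) = M/(2*M+1)" using M by (simp add: field_simps)
  have lp: "log 2 ((M+1)/(2*M+1)) = lM1 - lB" unfolding lM1_def lB_def using M by (simp add: log_divide)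
  have lq: "log 2 (M/(2*M+1)) = lM - lB" unfolding lM_def lB_def using M by (simp add: log_divide)
  have a: "(2*M+1)*((M+1)/(2*M+1)) = M+1" "(2*M+1)*(M/(2*M+1)) = M" using M by simp_all
  have hh0: "(2*M+1) * h2 ((M+1)/(2*M+1)) = -(((2*M+1)*((M+1)/(2*M+1)))*(lM1 - lB) + ((2*M+1)*(M/(2*M+1)))*(lM - lB))"
    unfolding h2_def q lp lq by (rule Gdist)
  have hh: "(2*M+1) * h2 ((M+1)/(2*M+1)) = -((M+1)*(lM1 - lB) + M*(lM - lB))"
    using hh0 unfolding a .
  have r: "(2*M+1)^2 - 1 = 4*M*(M+1)" by (simp add: algebra_simps power2_eq_square)
  have lr: "log 2 ((pi/2) * (4*M*(M+1)/(2*M+1))) = lpi + 1 + lM + lM1 - lB"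
    unfolding lpi_def lM_def lM1_def lB_def using M
    by (simp add: log_mult log_divide log2_4 log2_8)
  have lG: "log 2 (1/(pi*(M + 5/4))) = 2 - lpi - lD"
  proof -
    have "1/(pi*(M + 5/4)) = 4/(pi*(4*M+5))" by (simp add: field_simps)
    then show ?thesis unfolding lpi_def lD_def using M
      by (simp add: log_mult log_divide log2_4 log2_8)
  qed
  have cform: "cexp (2*m+1) + 1 + (1/2) * log 2 (1/(pi*(real m + 5/4)))
      = (1/2) * ((2*M+1)*(lM + lM1 + 2 - 2*lB) + (2*lM1 + 3 - lB - lD))"
  proof -
    have ce: "cexp (2*m+1) = -1 + (2*M+1) - (2*M+1) * h2 ((M+1)/(2*M+1)) + (1/2) * (lpi + 1 + lM + lM1 - lB)"
      unfolding cexp_def i p r lr by (simp add: algebra_simps)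
    show ?thesis unfolding ce hh M_def[symmetric] lG by (simp add: field_simps)
  qed
  have ln2: "ln (2::real) > 0" by simp
  have K1: "lM + lM1 + 2 - 2*lB \<le> -1/((2*M+1)^2 * ln 2)"
  proof -
    have "lM + lM1 + 2 - 2*lB = log 2 (4*M*(M+1)/(2*M+1)^2)"
      unfolding lM_def lM1_def lB_def using M by (simp add: log_mult log_divide log_nat_power log2_4 log2_8)
    also have "\<dots> \<le> (4*M*(M+1)/(2*M+1)^2 - 1) / ln 2" by (rule log2_le) (use M in simp)
    also have "4*M*(M+1)/(2*M+1)^2 - 1 = -1/(2*M+1)^2"
    proof -
      have e: "4*M*(M+1) = (2*M+1)^2 - 1" by (simp add: algebra_simps power2_eq_square)
      have "(2*M+1)^2 > 0" using M by simp
      then show ?thesis unfolding e by (simp add: diff_divide_distrib)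
    qed
    finally show ?thesis by simp
  qed
  have K2: "2*lM1 + 3 - lB - lD \<le> (2*M+3)/((2*M+1)*(4*M+5) * ln 2)"
  proof -
    have "2*lM1 + 3 - lB - lD = log 2 (8*(M+1)^2/((2*M+1)*(4*M+5)))"
      unfolding lM1_def lB_def lD_def using M by (simp add: log_mult log_divide log_nat_power log2_4 log2_8)
    also have "\<dots> \<le> (8*(M+1)^2/((2*M+1)*(4*M+5)) - 1) / ln 2" by (rule log2_le) (use M in simp)
    also have "8*(M+1)^2/((2*M+1)*(4*M+5)) - 1 = (2*M+3)/((2*M+1)*(4*M+5))"
    proof -
      have pos: "(2*M+1)*(4*M+5) > 0" using M by simp
      have e: "8*(M+1)^2 = (2*M+1)*(4*M+5) + (2*M+3)" by (simp add: algebra_simps power2_eq_square)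
      show ?thesis unfolding e using pos M by (simp add: add_divide_distrib)
    qed
    finally show ?thesis by simp
  qed
  have K1': "(2*M+1)*(lM + lM1 + 2 - 2*lB) \<le> -1/((2*M+1) * ln 2)"
  proof -
    have "(2*M+1)*(lM + lM1 + 2 - 2*lB) \<le> (2*M+1) * (-1/((2*M+1)^2 * ln 2))"
      by (rule mult_left_mono[OF K1]) (use M in simp)
    also have "\<dots> = -1/((2*M+1) * ln 2)" by (rule gen1) (use M in simp)
    finally show ?thesis .
  qed
  have K3: "-1/((2*M+1) * ln 2) + (2*M+3)/((2*M+1)*(4*M+5) * ln 2) \<le> 0"
  proof -
    have "(2*M+3)/((2*M+1)*(4*M+5) * ln 2) \<le> (4*M+5)/((2*M+1)*(4*M+5) * ln 2)"
      using M ln2 by (intro divide_right_mono) auto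
    also have "\<dots> = 1/((2*M+1) * ln 2)" by (rule gen2) (use M in simp)
    finally show ?thesis by simp
  qed
  have "cexp (2*m+1) + 1 + (1/2) * log 2 (1/(pi*(real m + 5/4))) \<le> 0"
    unfolding cform by (rule gen3[OF K1' K2 K3])
  then show ?thesis by linarith
qed

lemma c_even:
  assumes m: "m \<ge> 1"
  shows "cexp (2*m) \<le> -1 - (1/2) * log 2 (real m / ((real m + 1) * (pi * (real m + 1/4))))"
proof -
  define M where "M = real m"
  have M: "M \<ge> 1" using m by (simp add: M_def)
  define lM where "lM = log 2 M"
  define lM1 where "lM1 = log 2 (M+1)"
  define lB where "lB = log 2 (2*M+1)"
  define lE where "lE = log 2 (2*M-1)"
  define lK where "lK = log 2 (4*M+1)"
  define lpi where "lpi = log 2 pi"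
  have i: "real (2*m) = 2*M" by (simp add: M_def)
  have p: "(2*M+1)/(2*(2*M)) = (2*M+1)/(4*M)" by simp
  have q: "1 - (2*M+1)/(4*M) = (2*M-1)/(4*M)" using M by (simp add: field_simps)
  have l4: "log 2 (4*M) = 2 + lM" unfolding lM_def using M
    by (simp add: log_mult log2_4)
  have lp: "log 2 ((2*M+1)/(4*M)) = lB - 2 - lM" unfolding lB_def using M l4 by (simp add: log_divide)
  have lq: "log 2 ((2*M-1)/(4*M)) = lE - 2 - lM" unfolding lE_def using M l4 by (simp add: log_divide)
  have a: "(2*M)*((2*M+1)/(4*M)) = M+1/2" "(2*M)*((2*M-1)/(4*M)) = M-1/2" using M by (simp_all add: field_simps)
  have hh0: "(2*M) * h2 ((2*M+1)/(4*M)) = -(((2*M)*((2*M+1)/(4*M)))*(lB - 2 - lM) + ((2*M)*((2*M-1)/(4*M)))*(lE - 2 - lM))"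
    unfolding h2_def q lp lq by (rule Gdist)
  have hh: "(2*M) * h2 ((2*M+1)/(4*M)) = -((M+1/2)*(lB - 2 - lM) + (M-1/2)*(lE - 2 - lM))"
    using hh0 unfolding a .
  have r: "(2*M)^2 - 1 = (2*M-1)*(2*M+1)" by (simp add: algebra_simps power2_eq_square)
  have lr: "log 2 ((pi/2) * ((2*M-1)*(2*M+1)/(2*M))) = lpi - 2 + lE + lB - lM"
    unfolding lpi_def lM_def lE_def lB_def using M
    by (simp add: log_mult log_divide log2_4 log2_8)
  have lG: "log 2 (M / ((M + 1) * (pi * (M + 1/4)))) = 2 + lM - lpi - lK - lM1"
  proof -
    have "M / ((M + 1) * (pi * (M + 1/4))) = 4*M/(pi*(4*M+1)*(M+1))" by (simp add: field_simps)
    then show ?thesis unfolding lpi_def lK_def lM_def lM1_def using M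
      by (simp add: log_mult log_divide log2_4 log2_8)
  qed
  have cform: "cexp (2*m) + 1 + (1/2) * log 2 (real m / ((real m + 1) * (pi * (real m + 1/4))))
      = (1/2) * (2*M*(lB + lE - 2 - 2*lM) + (2*lB - lK - lM1))"
  proof -
    have ce: "cexp (2*m) = -1 + (2*M) - (2*M) * h2 ((2*M+1)/(4*M)) + (1/2) * (lpi - 2 + lE + lB - lM)"
      unfolding cexp_def i p r lr by (simp add: algebra_simps)
    show ?thesis unfolding ce hh M_def[symmetric] lG by (simp add: field_simps)
  qed
  have K1: "lB + lE - 2 - 2*lM \<le> 0"
  proof -
    have "lB + lE - 2 - 2*lM = log 2 ((2*M+1)*(2*M-1)/(4*M^2))"
      unfolding lM_def lB_def lE_def using M by (simp add: log_mult log_divide log_nat_power log2_4 log2_8)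
    also have "\<dots> \<le> 0"
    proof -
      have "(2*M+1)*(2*M-1)/(4*M^2) \<le> 1" using M by (simp add: field_simps power2_eq_square)
      moreover have "(2*M+1)*(2*M-1)/(4*M^2) > 0" using M by simp
      ultimately show ?thesis by simp
    qed
    finally show ?thesis .
  qed
  have K2: "2*lB - lK - lM1 \<le> 0"
  proof -
    have "2*lB - lK - lM1 = log 2 ((2*M+1)^2/((4*M+1)*(M+1)))"
      unfolding lM1_def lB_def lK_def using M by (simp add: log_mult log_divide log_nat_power log2_4 log2_8)
    also have "\<dots> \<le> 0"
    proof -
      have le: "(2*M+1)^2 \<le> (4*M+1)*(M+1)" using M by (simp add: algebra_simps power2_eq_square)
      have "(4*M+1)*(M+1) > 0" using M by simp
      then have "(2*M+1)^2/((4*M+1)*(M+1)) \<le> 1" using le by (metis divide_le_eq_1_pos)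
      moreover have "(2*M+1)^2/((4*M+1)*(M+1)) > 0" using M by simp
      ultimately show ?thesis by simp
    qed
    finally show ?thesis .
  qed
  have "2*M*(lB + lE - 2 - 2*lM) \<le> 0" using K1 M by (simp add: mult_nonneg_nonpos)
  then have "cexp (2*m) + 1 + (1/2) * log 2 (real m / ((real m + 1) * (pi * (real m + 1/4)))) \<le> 0"
    unfolding cform using K2 by (intro half_sum_nonpos)
  then show ?thesis by linarith
qed


lemma termeq: "(m::real) > 0 \<Longrightarrow> c \<ge> 0 \<Longrightarrow> m * (c/m) powr a = c powr a * m powr (1-a)"
  by (simp add: powr_divide powr_diff)

lemma upper_core:
  fixes \<alpha> m1 m2 :: real
  assumes a: "\<alpha> \<ge> 1" and m1: "m1 \<ge> 1/2^i" and m2: "m2 \<ge> 1/2^i"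
  shows "((1/2) powr \<alpha> * (m1 powr (1-\<alpha>) + m2 powr (1-\<alpha>))) powr (1/\<alpha>)
     \<le> 2 powr (real i * ((\<alpha> - 1) / \<alpha>) - 1 + 1 / \<alpha>)"
proof -
  have p: "(1/2::real)^i > 0" by simp
  have b1: "m1 powr (1-\<alpha>) \<le> (1/2^i) powr (1-\<alpha>)"
    by (rule powr_mono2') (use a m1 in auto)
  have b2: "m2 powr (1-\<alpha>) \<le> (1/2^i) powr (1-\<alpha>)"
    by (rule powr_mono2') (use a m2 in auto)
  have e1: "(1/2::real) powr \<alpha> = 2 powr (-\<alpha>)" by (simp add: powr_minus_divide powr_divide)
  have e2: "(1/2^i::real) powr (1-\<alpha>) = 2 powr (real i * (\<alpha>-1))"
  proof -
    have "(1/2^i::real) = 2 powr (- real i)" by (simp add: powr_minus_divide powr_realpow)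
    then show ?thesis by (simp add: powr_powr algebra_simps)
  qed
  have "(1/2) powr \<alpha> * (m1 powr (1-\<alpha>) + m2 powr (1-\<alpha>)) \<le> (1/2) powr \<alpha> * (2 * (1/2^i) powr (1-\<alpha>))"
    using b1 b2 by (intro mult_left_mono) auto
  also have "\<dots> = 2 powr (1 - \<alpha> + real i * (\<alpha>-1))"
  proof -
    have "2 powr (1 - \<alpha> + real i * (\<alpha>-1)) = 2 powr 1 * 2 powr (-\<alpha>) * 2 powr (real i * (\<alpha>-1))"
    proof -
      have "1 - \<alpha> + real i * (\<alpha>-1) = 1 + (-\<alpha>) + real i * (\<alpha>-1)" by simp
      then show ?thesis by (simp only: powr_add)
    qed
    then show ?thesis unfolding e1 e2 by simp
  qed
  finally have H: "(1/2) powr \<alpha> * (m1 powr (1-\<alpha>) + m2 powr (1-\<alpha>)) \<le> 2 powr (1 - \<alpha> + real i * (\<alpha>-1))" .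
  have "((1/2) powr \<alpha> * (m1 powr (1-\<alpha>) + m2 powr (1-\<alpha>))) powr (1/\<alpha>) \<le> (2 powr (1 - \<alpha> + real i * (\<alpha>-1))) powr (1/\<alpha>)"
    by (rule powr_mono2) (use a H in auto)
  also have "\<dots> = 2 powr (real i * ((\<alpha> - 1) / \<alpha>) - 1 + 1 / \<alpha>)"
    using a by (simp add: powr_powr field_simps)
  finally show ?thesis .
qed

lemma lower_core:
  fixes \<alpha> m1 m2 G c :: real
  assumes a: "\<alpha> \<ge> 1" and m1: "m1 > 0" and m2: "m2 > 0" and G: "m1 * m2 \<le> G"
    and c: "c \<le> -1 - (1/2) * log 2 G"
  shows "2 powr ((\<alpha> - 1) / \<alpha> * c) \<le> ((1/2) powr \<alpha> * (m1 powr (1-\<alpha>) + m2 powr (1-\<alpha>))) powr (1/\<alpha>)"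
proof -
  define H where "H = (1/2) powr \<alpha> * (m1 powr (1-\<alpha>) + m2 powr (1-\<alpha>))"
  have Gp: "G > 0" using m1 m2 G by (smt (verit) mult_pos_pos)
  define uu where "uu = m1 powr ((1-\<alpha>)/2)"
  define vv where "vv = m2 powr ((1-\<alpha>)/2)"
  have u2: "m1 powr (1-\<alpha>) = uu * uu" unfolding uu_def using m1 by (simp add: powr_add[symmetric])
  have v2: "m2 powr (1-\<alpha>) = vv * vv" unfolding vv_def using m2 by (simp add: powr_add[symmetric])
  have uv: "uu * vv = (m1*m2) powr ((1-\<alpha>)/2)" unfolding uu_def vv_def using m1 m2 by (simp add: powr_mult)
  have amgm: "uu * uu + vv * vv \<ge> 2*(uu * vv)"
  proof -
    have "0 \<le> (uu - vv)^2" by simp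
    then show ?thesis by (simp add: power2_eq_square algebra_simps)
  qed
  have mono: "(m1*m2) powr ((1-\<alpha>)/2) \<ge> G powr ((1-\<alpha>)/2)"
    by (rule powr_mono2') (use a m1 m2 G in auto)
  have L: "H \<ge> (1/2) powr \<alpha> * (2 * G powr ((1-\<alpha>)/2))"
    unfolding H_def u2 v2 using amgm mono uv by (intro mult_left_mono) auto
  have Lpos: "(1/2) powr \<alpha> * (2 * G powr ((1-\<alpha>)/2)) > 0" using Gp by simp
  have Hpos: "H > 0" using L Lpos by linarith
  have logL: "log 2 ((1/2) powr \<alpha> * (2 * G powr ((1-\<alpha>)/2))) = 1 - \<alpha> + ((1-\<alpha>)/2) * log 2 G"
    using Gp by (simp add: log_mult log_powr log_divide)
  have "log 2 H \<ge> 1 - \<alpha> + ((1-\<alpha>)/2) * log 2 G"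
    using L Lpos logL by (metis log_le_cancel_iff one_less_numeral_iff semiring_norm(76) Hpos)
  then have "log 2 H / \<alpha> \<ge> (1 - \<alpha> + ((1-\<alpha>)/2) * log 2 G) / \<alpha>"
    using a by (intro divide_right_mono) auto
  moreover have "(1 - \<alpha> + ((1-\<alpha>)/2) * log 2 G) / \<alpha> = (\<alpha> - 1)/\<alpha> * (-1 - (1/2) * log 2 G)"
    using a by (simp add: field_simps)
  moreover have "(\<alpha> - 1)/\<alpha> * (-1 - (1/2) * log 2 G) \<ge> (\<alpha> - 1)/\<alpha> * c"
    using a c by (intro mult_left_mono) auto
  ultimately have E: "(\<alpha> - 1)/\<alpha> * c \<le> log 2 H / \<alpha>" by linarith
  have "2 powr ((\<alpha> - 1)/\<alpha> * c) \<le> 2 powr (log 2 H / \<alpha>)"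
    using E by (intro powr_mono) auto
  also have "2 powr (log 2 H / \<alpha>) = H powr (1/\<alpha>)"
  proof -
    have "H powr (1/\<alpha>) = (2 powr (log 2 H)) powr (1/\<alpha>)" using Hpos by simp
    also have "\<dots> = 2 powr (log 2 H / \<alpha>)" by (simp add: powr_powr)
    finally show ?thesis by simp
  qed
  finally show ?thesis unfolding H_def .
qed


lemma H_div_pmf:
  fixes p q :: "'a pmf"
  assumes fin: "finite (set_pmf q)" and sub: "set_pmf p \<subseteq> set_pmf q"
  shows "H_div a (measure_pmf p) (measure_pmf q) = (\<Sum>y\<in>set_pmf q. pmf q y * (pmf p y / pmf q y) powr a)"
proof -
  have d: "density (measure_pmf q) (\<lambda>x. ennreal (pmf p x / pmf q x)) = measure_pmf p"
  proof -
    have "density (measure_pmf q) (\<lambda>x. ennreal (pmf p x / pmf q x))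
        = density (count_space UNIV) (\<lambda>x. ennreal (pmf q x) * ennreal (pmf p x / pmf q x))"
      unfolding measure_pmf_eq_density by (subst density_density_eq) auto
    also have "\<dots> = density (count_space UNIV) (\<lambda>x. ennreal (pmf p x))"
    proof (intro density_cong)
      show "AE x in count_space UNIV. ennreal (pmf q x) * ennreal (pmf p x / pmf q x) = ennreal (pmf p x)"
      proof (intro AE_I2)
        fix x
        show "ennreal (pmf q x) * ennreal (pmf p x / pmf q x) = ennreal (pmf p x)"
        proof (cases "pmf q x = 0")
          case True
          then have "pmf p x = 0" using sub by (auto simp: set_pmf_eq)
          then show ?thesis using True by simp
        next
          case False
          then show ?thesis by (simp add: ennreal_mult'[symmetric])
        qed
      qed
    qed auto
    finally show ?thesis by (simp add: measure_pmf_eq_density)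
  qed
  have ae: "AE x in measure_pmf q. ennreal (pmf p x / pmf q x) = RN_deriv (measure_pmf q) (measure_pmf p) x"
    by (rule measure_pmf.RN_deriv_unique[OF _ d]) simp
  have "H_div a (measure_pmf p) (measure_pmf q) = (\<integral>x. (pmf p x / pmf q x) powr a \<partial>measure_pmf q)"
    unfolding H_div_def
  proof (intro integral_cong_AE)
    show "AE x in measure_pmf q. enn2real (RN_deriv (measure_pmf q) (measure_pmf p) x) powr a = (pmf p x / pmf q x) powr a"
      using ae
    proof (rule eventually_mono)
      fix x assume "ennreal (pmf p x / pmf q x) = RN_deriv (measure_pmf q) (measure_pmf p) x"
      then have "enn2real (RN_deriv (measure_pmf q) (measure_pmf p) x) = pmf p x / pmf q x"
        by (metis enn2real_ennreal pmf_nonneg divide_nonneg_nonneg)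
      then show "enn2real (RN_deriv (measure_pmf q) (measure_pmf p) x) powr a = (pmf p x / pmf q x) powr a" by simp
    qed
  qed auto
  also have "\<dots> = (\<Sum>y\<in>set_pmf q. pmf q y * (pmf p y / pmf q y) powr a)"
    by (subst integral_measure_pmf[OF fin]) auto
  finally show ?thesis .
qed


lemma finite_S_law: "finite (set_pmf (S_law n))"
  unfolding set_S_law by simp

lemma H_cond_formula:
  assumes x: "x \<in> set_pmf (S_law j)" and a: "\<alpha> \<ge> 1"
  shows "H_div \<alpha> (measure_pmf (cond_step_law (Suc j) x)) (measure_pmf (S_law (Suc j)))
       = (1/2) powr \<alpha> * (pmf (S_law (Suc j)) (x-1) powr (1-\<alpha>) + pmf (S_law (Suc j)) (x+1) powr (1-\<alpha>))"
    (is "?H = _")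
proof -
  let ?mu = "S_law (Suc j)"
  let ?nu = "cond_step_law (Suc j) x"
  have nu: "?nu = map_pmf (\<lambda>y. x + y) rademacher" by (rule cond_step_law_eq[OF x])
  have inj: "inj (\<lambda>y::int. x + y)" by (auto simp: inj_def)
  have pnu: "pmf ?nu y = (if y \<in> {x-1, x+1} then 1/2 else 0)" for y
  proof -
    have "pmf ?nu y = pmf (map_pmf (\<lambda>y. x + y) rademacher) (x + (y - x))" unfolding nu by simp
    also have "\<dots> = pmf rademacher (y - x)" by (rule pmf_map_inj'[OF inj])
    finally show ?thesis by (auto simp: pmf_rademacher)
  qed
  have m1: "x - 1 \<in> set_pmf ?mu" "x + 1 \<in> set_pmf ?mu"
    unfolding set_S_law_Suc using x by force+
  have setnu: "set_pmf ?nu = {x-1, x+1}" unfolding nu by auto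
  have sub: "set_pmf ?nu \<subseteq> set_pmf ?mu" using m1 setnu by auto
  have "?H = (\<Sum>y\<in>set_pmf ?mu. pmf ?mu y * (pmf ?nu y / pmf ?mu y) powr \<alpha>)"
    by (rule H_div_pmf[OF finite_S_law sub])
  also have "\<dots> = (\<Sum>y\<in>{x-1, x+1}. pmf ?mu y * (pmf ?nu y / pmf ?mu y) powr \<alpha>)"
    by (rule sum.mono_neutral_right) (use finite_S_law m1 pnu in auto)
  also have "\<dots> = pmf ?mu (x-1) * ((1/2) / pmf ?mu (x-1)) powr \<alpha> + pmf ?mu (x+1) * ((1/2) / pmf ?mu (x+1)) powr \<alpha>"
    by (simp add: pnu)
  also have "\<dots> = (1/2) powr \<alpha> * (pmf ?mu (x-1) powr (1-\<alpha>) + pmf ?mu (x+1) powr (1-\<alpha>))"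
  proof -
    have p: "pmf ?mu (x-1) > 0" "pmf ?mu (x+1) > 0" using m1 by (simp_all add: pmf_positive)
    show ?thesis using termeq[OF p(1), of "1/2" \<alpha>] termeq[OF p(2), of "1/2" \<alpha>]
      by (simp add: algebra_simps)
  qed
  finally show ?thesis .
qed

lemma Pc1: "Pc 1 = 1/2" unfolding Pc_def by simp

lemma part1:
  assumes a: "\<alpha> \<ge> 1" and i: "i \<ge> 1" and x: "x \<in> set_pmf (S_law (i - 1))"
  shows "2 powr ((\<alpha> - 1) / \<alpha> * cexp i)
            \<le> H_div \<alpha> (measure_pmf (cond_step_law i x)) (measure_pmf (S_law i)) powr (1 / \<alpha>)
       \<and> H_div \<alpha> (measure_pmf (cond_step_law i x)) (measure_pmf (S_law i)) powr (1 / \<alpha>)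
            \<le> 2 powr (real i * ((\<alpha> - 1) / \<alpha>) - 1 + 1 / \<alpha>)"
proof -
  obtain j where j: "i = Suc j" using i by (cases i) auto
  have x': "x \<in> set_pmf (S_law j)" using x j by simp
  let ?mu = "S_law i"
  define m1 where "m1 = pmf ?mu (x-1)"
  define m2 where "m2 = pmf ?mu (x+1)"
  have Hf: "H_div \<alpha> (measure_pmf (cond_step_law i x)) (measure_pmf ?mu) = (1/2) powr \<alpha> * (m1 powr (1-\<alpha>) + m2 powr (1-\<alpha>))"
    unfolding m1_def m2_def j by (rule H_cond_formula[OF x' a])
  have mem: "x - 1 \<in> set_pmf ?mu" "x + 1 \<in> set_pmf ?mu"
    unfolding j set_S_law_Suc using x' by force+
  have pos: "m1 > 0" "m2 > 0" unfolding m1_def m2_def using mem by (simp_all add: pmf_positive)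
  have lb: "m1 \<ge> 1/2^i" "m2 \<ge> 1/2^i" unfolding m1_def m2_def using mem by (simp_all add: mu_lower)
  have up: "H_div \<alpha> (measure_pmf (cond_step_law i x)) (measure_pmf ?mu) powr (1 / \<alpha>)
            \<le> 2 powr (real i * ((\<alpha> - 1) / \<alpha>) - 1 + 1 / \<alpha>)"
    unfolding Hf by (rule upper_core[OF a lb])
  have "\<exists>G. m1 * m2 \<le> G \<and> cexp i \<le> -1 - (1/2) * log 2 G"
  proof (cases "odd i")
    case True
    then obtain m where m: "i = 2*m+1" by (metis oddE)
    have b1: "m1 \<le> Pc (m+1)" "m2 \<le> Pc (m+1)" unfolding m1_def m2_def m by (rule mu_odd)+
    have prod: "m1 * m2 \<le> Pc (m+1) * Pc (m+1)"
      using b1 pos by (intro mult_mono) auto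
    show ?thesis
    proof (cases "m = 0")
      case True
      then have "i = 1" using m by simp
      moreover have "-1 - (1/2) * log 2 (1/4::real) = 0"
        using log2_4 by (simp add: log_divide)
      moreover have h: "Pc (m+1) = 1/2" using True Pc1 by simp
      have "m1 * m2 \<le> 1/4" using prod unfolding h by simp
      ultimately show ?thesis using c_one by (intro exI[of _ "1/4"]) simp
    next
      case False
      have "Pc (m+1) * Pc (m+1) \<le> 1 / (pi * (real (m+1) + 1/4))"
        using Pc_bound[of "m+1"] by (simp add: power2_eq_square)
      also have "real (m+1) + 1/4 = real m + 5/4" by simp
      finally have "m1 * m2 \<le> 1 / (pi * (real m + 5/4))" using prod by linarith
      moreover have "cexp i \<le> -1 - (1/2) * log 2 (1/(pi*(real m + 5/4)))"
        unfolding m using c_odd[of m] False by simp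
      ultimately show ?thesis by blast
    qed
  next
    case False
    then obtain m where m: "i = 2*m" by (metis evenE)
    have m0: "m \<ge> 1" using m i by simp
    have b: "m1 * m2 \<le> Pc m * (Pc m * m / (m+1))"
    proof (cases "x - 1 = 0")
      case True
      then have "x + 1 \<noteq> 0" by simp
      then have "m2 \<le> Pc m * m / (m+1)" unfolding m2_def m by (rule mu_even_off)
      moreover have "m1 \<le> Pc m" unfolding m1_def m by (rule mu_even)
      ultimately show ?thesis using pos by (intro mult_mono) auto
    next
      case False
      then have "m1 \<le> Pc m * m / (m+1)" unfolding m1_def m by (rule mu_even_off)
      moreover have "m2 \<le> Pc m" unfolding m2_def m by (rule mu_even)
      ultimately have "m1 * m2 \<le> (Pc m * m / (m+1)) * Pc m" using pos by (intro mult_mono) auto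
      then show ?thesis by (simp add: algebra_simps)
    qed
    also have "Pc m * (Pc m * m / (m+1)) = (Pc m)^2 * (m / (m+1))" by (simp add: power2_eq_square)
    also have "\<dots> \<le> (1 / (pi * (m + 1/4))) * (m / (m+1))"
      by (rule mult_right_mono[OF Pc_bound]) simp
    also have "\<dots> = real m / ((real m + 1) * (pi * (real m + 1/4)))" by (simp add: field_simps)
    finally have "m1 * m2 \<le> real m / ((real m + 1) * (pi * (real m + 1/4)))" .
    moreover have "cexp i \<le> -1 - (1/2) * log 2 (real m / ((real m + 1) * (pi * (real m + 1/4))))"
      unfolding m using c_even[OF m0] .
    ultimately show ?thesis by blast
  qed
  then obtain G where G: "m1 * m2 \<le> G" "cexp i \<le> -1 - (1/2) * log 2 G" by blast
  have lo: "2 powr ((\<alpha> - 1) / \<alpha> * cexp i)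
            \<le> H_div \<alpha> (measure_pmf (cond_step_law i x)) (measure_pmf ?mu) powr (1 / \<alpha>)"
    unfolding Hf by (rule lower_core[OF a pos G])
  show ?thesis using lo up by blast
qed


lemma steps_support:
  assumes "X \<in> set_pmf (steps n)"
  shows "\<forall>k<n. X k \<in> {-1,1}" "\<forall>k. k \<ge> n \<longrightarrow> X k = 0"
  using assms unfolding steps_def by (auto simp: set_Pi_pmf PiE_dflt_def)

lemma finite_PiE_dflt: "finite A \<Longrightarrow> (\<And>x. x \<in> A \<Longrightarrow> finite (B x)) \<Longrightarrow> finite (PiE_dflt A d B)"
proof -
  assume "finite A" "\<And>x. x \<in> A \<Longrightarrow> finite (B x)"
  then have "finite (PiE A B)" by (rule finite_PiE)
  then have "finite ((\<lambda>h x. if x \<in> A then h x else d) ` PiE A B)" by (rule finite_imageI)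
  then show ?thesis unfolding dflt_image_PiE .
qed

lemma finite_steps: "finite (set_pmf (steps n))"
proof -
  have "set_pmf (steps n) = PiE_dflt {..<n} 0 (set_pmf \<circ> (\<lambda>_. rademacher))"
    unfolding steps_def by (simp add: set_Pi_pmf)
  then show ?thesis by (simp add: finite_PiE_dflt)
qed

lemma pmf_steps: "X \<in> set_pmf (steps n) \<Longrightarrow> pmf (steps n) X = (1/2)^n"
proof -
  assume X: "X \<in> set_pmf (steps n)"
  have "pmf (steps n) X = (\<Prod>k\<in>{..<n}. pmf rademacher (X k))"
    unfolding steps_def using steps_support(2)[OF X] by (simp add: pmf_Pi)
  also have "\<dots> = (\<Prod>k\<in>{..<n}. 1/2)"
    using steps_support(1)[OF X] by (intro prod.cong) (auto simp: pmf_rademacher)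
  finally show ?thesis by simp
qed

lemma walk_in_S_law: "\<forall>k<j. X k \<in> {-1,1} \<Longrightarrow> walk X j \<in> set_pmf (S_law j)"
proof (induction j)
  case 0
  then show ?case by (simp add: walk_def S_law_def steps_def)
next
  case (Suc j)
  then have "walk X j \<in> set_pmf (S_law j)" "X j \<in> {-1,1}" by auto
  then show ?case unfolding set_S_law_Suc walk_Suc by blast
qed

lemma finite_Q: "finite (set_pmf (prod_marg_law n))"
proof -
  have "set_pmf (prod_marg_law n) = PiE_dflt {1..n} 0 (set_pmf \<circ> S_law)"
    unfolding prod_marg_law_def by (simp add: set_Pi_pmf)
  then show ?thesis by (simp add: finite_PiE_dflt finite_S_law)
qed

definition gmap :: "nat \<Rightarrow> (nat \<Rightarrow> int) \<Rightarrow> nat \<Rightarrow> int" where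
  "gmap n X = (\<lambda>j. if j \<in> {1..n} then walk X j else 0)"

lemma joint_gmap: "joint_law n = map_pmf (gmap n) (steps n)"
  unfolding joint_law_def gmap_def ..

lemma gmap_walk: "k \<le> n \<Longrightarrow> gmap n X k = walk X k"
  unfolding gmap_def by (cases k) (auto simp: walk_def)

lemma inj_gmap: "inj_on (gmap n) (set_pmf (steps n))"
proof (rule inj_onI)
  fix X Y assume X: "X \<in> set_pmf (steps n)" and Y: "Y \<in> set_pmf (steps n)" and e: "gmap n X = gmap n Y"
  show "X = Y"
  proof
    fix k
    show "X k = Y k"
    proof (cases "k < n")
      case True
      have "X k = gmap n X (Suc k) - gmap n X k"
        using True by (simp add: gmap_walk walk_Suc)
      also have "\<dots> = gmap n Y (Suc k) - gmap n Y k" using e by simp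
      also have "\<dots> = Y k" using True by (simp add: gmap_walk walk_Suc)
      finally show ?thesis .
    next
      case False
      then show ?thesis using steps_support(2)[OF X] steps_support(2)[OF Y] by simp
    qed
  qed
qed

lemma pmf_Q_gmap:
  "pmf (prod_marg_law n) (gmap n X) = (\<Prod>j\<in>{1..n}. pmf (S_law j) (walk X j))"
proof -
  have c: "\<forall>x. x \<notin> {1..n} \<longrightarrow> gmap n X x = 0" by (simp add: gmap_def)
  have "pmf (prod_marg_law n) (gmap n X) = (\<Prod>j\<in>{1..n}. pmf (S_law j) (gmap n X j))"
    unfolding prod_marg_law_def pmf_Pi[OF finite_atLeastAtMost] using c by simp
  also have "\<dots> = (\<Prod>j\<in>{1..n}. pmf (S_law j) (walk X j))"
    by (intro prod.cong) (auto simp: gmap_def)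
  finally show ?thesis .
qed

lemma H_joint:
  fixes \<alpha> :: real assumes a: "\<alpha> \<ge> 1"
  shows "H_div \<alpha> (measure_pmf (joint_law n)) (measure_pmf (prod_marg_law n))
     = (\<Sum>X\<in>set_pmf (steps n). ((1/2)^n) powr \<alpha> * (\<Prod>j\<in>{1..n}. pmf (S_law j) (walk X j)) powr (1-\<alpha>))"
proof -
  let ?P = "joint_law n" and ?Q = "prod_marg_law n"
  have qpos: "pmf ?Q (gmap n X) > 0" if X: "X \<in> set_pmf (steps n)" for X
  proof -
    have "walk X j \<in> set_pmf (S_law j)" if "j \<in> {1..n}" for j
      using steps_support(1)[OF X] that by (intro walk_in_S_law) auto
    then show ?thesis unfolding pmf_Q_gmap by (intro prod_pos) (auto simp: pmf_positive)
  qed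
  have setP: "set_pmf ?P = gmap n ` set_pmf (steps n)" unfolding joint_gmap by simp
  have sub: "set_pmf ?P \<subseteq> set_pmf ?Q"
  proof
    fix s assume "s \<in> set_pmf ?P"
    then obtain X where X: "X \<in> set_pmf (steps n)" "s = gmap n X" unfolding setP by auto
    show "s \<in> set_pmf ?Q" using qpos[OF X(1)] X(2) by (simp add: set_pmf_iff)
  qed
  have pP: "pmf ?P (gmap n X) = (1/2)^n" if "X \<in> set_pmf (steps n)" for X
    unfolding joint_gmap using that by (simp add: pmf_map_inj[OF inj_gmap] pmf_steps)
  have "H_div \<alpha> (measure_pmf ?P) (measure_pmf ?Q) = (\<Sum>s\<in>set_pmf ?Q. pmf ?Q s * (pmf ?P s / pmf ?Q s) powr \<alpha>)"
    by (rule H_div_pmf[OF finite_Q sub])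
  also have "\<dots> = (\<Sum>s\<in>set_pmf ?P. pmf ?Q s * (pmf ?P s / pmf ?Q s) powr \<alpha>)"
    by (rule sum.mono_neutral_right[OF finite_Q sub]) (auto simp: set_pmf_iff)
  also have "\<dots> = (\<Sum>X\<in>set_pmf (steps n). pmf ?Q (gmap n X) * (pmf ?P (gmap n X) / pmf ?Q (gmap n X)) powr \<alpha>)"
    unfolding setP by (simp add: sum.reindex[OF inj_gmap])
  also have "\<dots> = (\<Sum>X\<in>set_pmf (steps n). ((1/2)^n) powr \<alpha> * (\<Prod>j\<in>{1..n}. pmf (S_law j) (walk X j)) powr (1-\<alpha>))"
  proof (rule sum.cong[OF refl])
    fix X assume X: "X \<in> set_pmf (steps n)"
    show "pmf ?Q (gmap n X) * (pmf ?P (gmap n X) / pmf ?Q (gmap n X)) powr \<alpha> =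
        ((1/2)^n) powr \<alpha> * (\<Prod>j\<in>{1..n}. pmf (S_law j) (walk X j)) powr (1-\<alpha>)"
      unfolding pP[OF X] using termeq[OF qpos[OF X], of "(1/2)^n" \<alpha>] by (simp add: pmf_Q_gmap)
  qed
  finally show ?thesis .
qed


lemma Pc_dec: "decseq Pc"
proof (rule decseq_SucI)
  fix m
  have "Pc (Suc m) = Pc m * ((2*m+1) / (2*m+2))" unfolding Pc_Suc by (simp add: algebra_simps)
  also have "\<dots> \<le> Pc m * 1" using Pc_pos[of m] by (intro mult_left_mono) auto
  finally show "Pc (Suc m) \<le> Pc m" by simp
qed

lemma Pc2: "Pc 2 = 3/8"
proof -
  have "(4::nat) choose 2 = 6" by (simp add: numeral_eq_Suc)
  then show ?thesis unfolding Pc_def by simp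
qed

lemma mu_b: assumes j: "j \<ge> 1" shows "pmf (S_law j) y \<le> (if j \<le> 2 then 1/2 else 3/8)"
proof (cases "odd j")
  case True
  then obtain m where m: "j = 2*m+1" by (metis oddE)
  have b: "pmf (S_law j) y \<le> Pc (m+1)" unfolding m by (rule mu_odd)
  show ?thesis
  proof (cases "m = 0")
    case True
    then have "Pc (m+1) = 1/2" using Pc1 by simp
    then have "pmf (S_law j) y \<le> 1/2" using b by linarith
    moreover have "j \<le> 2" using m True by linarith
    ultimately show ?thesis by simp
  next
    case False
    then have "Pc (m+1) \<le> Pc 2" by (intro decseqD[OF Pc_dec]) simp
    then have "pmf (S_law j) y \<le> 3/8" using b Pc2 by linarith
    moreover have "\<not> j \<le> 2" using m False by linarith
    ultimately show ?thesis by simp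
  qed
next
  case False
  then obtain m where m: "j = 2*m" by (metis evenE)
  have m1: "m \<ge> 1" using j m by simp
  have b: "pmf (S_law j) y \<le> Pc m" unfolding m by (rule mu_even)
  show ?thesis
  proof (cases "m = 1")
    case True
    then have "pmf (S_law j) y \<le> 1/2" using b Pc1 by simp
    moreover have "j \<le> 2" using m True by linarith
    ultimately show ?thesis by simp
  next
    case False
    then have "Pc m \<le> Pc 2" using m1 by (intro decseqD[OF Pc_dec]) simp
    then have "pmf (S_law j) y \<le> 3/8" using b Pc2 by linarith
    moreover have "\<not> j \<le> 2" using m False m1 by linarith
    ultimately show ?thesis by simp
  qed
qed

lemma prod_upper:
  assumes n: "n \<ge> 2"
  shows "(\<Prod>j\<in>{1..n}. pmf (S_law j) (f j)) \<le> (1/4) * (3/8)^(n-2)"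
proof -
  have "(\<Prod>j\<in>{1..n}. pmf (S_law j) (f j)) \<le> (\<Prod>j\<in>{1..n}. (if j \<le> 2 then 1/2 else 3/8::real))"
    by (intro prod_mono) (auto simp: mu_b simp del: One_nat_def)
  also have "(\<Prod>j\<in>{1..n}. (if j \<le> 2 then 1/2 else 3/8::real)) = (\<Prod>j\<in>{1,2} \<union> {3..n}. (if j \<le> 2 then 1/2 else 3/8::real))"
  proof -
    have "{1..n} = {1,2} \<union> {3..n}" using n by auto
    then show ?thesis by simp
  qed
  also have "(\<Prod>j\<in>{1,2} \<union> {3..n}. (if j \<le> 2 then 1/2 else 3/8::real))
      = (\<Prod>j\<in>{1,2::nat}. (if j \<le> 2 then 1/2 else 3/8::real)) * (\<Prod>j\<in>{3..n}. (if j \<le> 2 then 1/2 else 3/8::real))"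
    by (rule prod.union_disjoint) auto
  also have "(\<Prod>j\<in>{3..n}. (if j \<le> 2 then 1/2 else 3/8::real)) = (\<Prod>j\<in>{3..n}. 3/8::real)"
    by (intro prod.cong) auto
  also have "\<dots> = (3/8)^(n-2)" by simp
  finally show ?thesis by simp
qed

lemma sum_real_Icc: "(\<Sum>j\<in>{1..n}. real j) = real n * (real n + 1) / 2"
  by (induction n) (simp_all add: field_simps)

lemma prod_lower:
  assumes f: "\<And>j. j \<in> {1..n} \<Longrightarrow> f j \<in> set_pmf (S_law j)"
  shows "(\<Prod>j\<in>{1..n}. pmf (S_law j) (f j)) \<ge> 2 powr (-(real n * (real n + 1) / 2))"
proof -
  have "2 powr (-(real n * (real n + 1) / 2)) = 2 powr (\<Sum>j\<in>{1..n}. - real j)"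
  proof -
    have "(\<Sum>j\<in>{1..n}. - real j) = -(real n * (real n + 1) / 2)"
      by (simp only: sum_negf sum_real_Icc)
    then show ?thesis by simp
  qed
  also have "\<dots> = (\<Prod>j\<in>{1..n}. 2 powr (- real j))" by (rule powr_sum) simp
  also have "\<dots> \<le> (\<Prod>j\<in>{1..n}. pmf (S_law j) (f j))"
  proof (rule prod_mono)
    fix j assume j: "j \<in> {1..n}"
    have "2 powr (- real j) = 1/2^j" by (simp add: powr_minus_divide powr_realpow)
    then show "0 \<le> 2 powr (- real j) \<and> 2 powr (- real j) \<le> pmf (S_law j) (f j)"
      using mu_lower[OF f[OF j]] by simp
  qed
  finally show ?thesis .
qed

lemma log2_43: "log 2 (4/3::real) \<ge> 1/4"
proof -
  have "4 * log 2 (3::real) = log 2 (3^4)" by (subst log_nat_power) simp_all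
  also have "\<dots> \<le> log 2 (2^7)" by simp
  also have "\<dots> = 7" using log_pow_cancel[of 2 7] by simp
  finally have "log 2 (3::real) \<le> 7/4" by simp
  moreover have "log 2 (4/3::real) = 2 - log 2 3" by (simp add: log_divide log2_4)
  ultimately show ?thesis by simp
qed


lemma part2:
  fixes \<alpha> :: real
  assumes a: "\<alpha> \<ge> 1" and n: "n \<ge> 2"
  shows "(real n - 2) * ((\<alpha> - 1) / \<alpha>) / 4
              \<le> log 2 (H_div \<alpha> (measure_pmf (joint_law n)) (measure_pmf (prod_marg_law n)) powr (1 / \<alpha>))
            \<and> log 2 (H_div \<alpha> (measure_pmf (joint_law n)) (measure_pmf (prod_marg_law n)) powr (1 / \<alpha>))
              \<le> real n * (real n - 1) * ((\<alpha> - 1) / \<alpha>) / 2"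
proof -
  define S where "S = set_pmf (steps n)"
  define w :: real where "w = (1/2)^n"
  define q where "q X = (\<Prod>j\<in>{1..n}. pmf (S_law j) (walk X j))" for X
  define H where "H = H_div \<alpha> (measure_pmf (joint_law n)) (measure_pmf (prod_marg_law n))"
  define ql :: real where "ql = 2 powr (-(real n * (real n + 1) / 2))"
  define qu :: real where "qu = (1/4) * (3/8)^(n-2)"
  have finS: "finite S" unfolding S_def by (rule finite_steps)
  have HS: "H = (\<Sum>X\<in>S. w powr \<alpha> * q X powr (1-\<alpha>))"
    unfolding H_def S_def w_def q_def by (rule H_joint[OF a])
  have sw: "(\<Sum>X\<in>S. w) = 1"
  proof -
    have "(\<Sum>X\<in>S. pmf (steps n) X) = 1" unfolding S_def by (rule sum_pmf_eq_1[OF finite_steps]) simp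
    moreover have "(\<Sum>X\<in>S. pmf (steps n) X) = (\<Sum>X\<in>S. w)"
      unfolding S_def w_def by (intro sum.cong) (simp_all add: pmf_steps)
    ultimately show ?thesis by simp
  qed
  have wpos: "w > 0" unfolding w_def by simp
  have wa: "w powr \<alpha> = w * w powr (\<alpha> - 1)"
  proof -
    have "w powr \<alpha> = w powr (1 + (\<alpha> - 1))" by simp
    also have "\<dots> = w powr 1 * w powr (\<alpha> - 1)" by (rule powr_add)
    also have "\<dots> = w * w powr (\<alpha> - 1)" using wpos by simp
    finally show ?thesis .
  qed
  have qpos: "q X > 0" if "X \<in> S" for X
  proof -
    have "walk X j \<in> set_pmf (S_law j)" if "j \<in> {1..n}" for j
      using steps_support(1)[OF \<open>X \<in> S\<close>[unfolded S_def]] that by (intro walk_in_S_law) auto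
    then show ?thesis unfolding q_def by (intro prod_pos) (auto simp: pmf_positive)
  qed
  have qlow: "q X \<ge> ql" if "X \<in> S" for X
    unfolding q_def ql_def
  proof (rule prod_lower)
    fix j assume j: "j \<in> {1..n}"
    have "\<forall>k<j. X k \<in> {-1,1}"
    proof (intro allI impI)
      fix k assume "k < j"
      then have "k < n" using j by simp
      then show "X k \<in> {-1,1}" using steps_support(1)[OF \<open>X \<in> S\<close>[unfolded S_def]] by blast
    qed
    then show "walk X j \<in> set_pmf (S_law j)" by (rule walk_in_S_law)
  qed
  have qup: "q X \<le> qu" if "X \<in> S" for X
    unfolding q_def qu_def by (rule prod_upper[OF n])
  have qlpos: "ql > 0" unfolding ql_def by simp
  have qupos: "qu > 0" unfolding qu_def by simp
  define U where "U = w powr (\<alpha> - 1) * ql powr (1-\<alpha>)"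
  define L where "L = w powr (\<alpha> - 1) * qu powr (1-\<alpha>)"
  have HU: "H \<le> U"
  proof -
    have "H \<le> (\<Sum>X\<in>S. w * U)"
      unfolding HS U_def wa
    proof (rule sum_mono)
      fix X assume X: "X \<in> S"
      have "q X powr (1-\<alpha>) \<le> ql powr (1-\<alpha>)"
        by (rule powr_mono2') (use a qlpos qlow[OF X] in auto)
      then show "w * w powr (\<alpha> - 1) * q X powr (1 - \<alpha>) \<le> w * (w powr (\<alpha> - 1) * ql powr (1 - \<alpha>))"
        using wpos by (simp add: mult.assoc mult_left_mono)
    qed
    also have "\<dots> = U" using sw by (simp add: sum_distrib_right[symmetric])
    finally show ?thesis .
  qed
  have HL: "H \<ge> L"
  proof -
    have "H \<ge> (\<Sum>X\<in>S. w * L)"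
      unfolding HS L_def wa
    proof (rule sum_mono)
      fix X assume X: "X \<in> S"
      have "q X powr (1-\<alpha>) \<ge> qu powr (1-\<alpha>)"
        by (rule powr_mono2') (use a qpos[OF X] qup[OF X] in auto)
      then show "w * (w powr (\<alpha> - 1) * qu powr (1 - \<alpha>)) \<le> w * w powr (\<alpha> - 1) * q X powr (1 - \<alpha>)"
        using wpos by (simp add: mult.assoc mult_left_mono)
    qed
    also have "(\<Sum>X\<in>S. w * L) = L" using sw by (simp add: sum_distrib_right[symmetric])
    finally show ?thesis .
  qed
  have Lpos: "L > 0" unfolding L_def using wpos qupos by simp
  have Upos: "U > 0" unfolding U_def using wpos qlpos by simp
  have Hpos: "H > 0" using HL Lpos by linarith
  have lw: "log 2 w = - real n"
  proof -
    have "log 2 w = real n * log 2 (1/2)" unfolding w_def by (simp add: log_nat_power)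
    then show ?thesis by (simp add: log_divide)
  qed
  have lql: "log 2 ql = -(real n * (real n + 1) / 2)" unfolding ql_def by simp
  have lqu: "log 2 qu = -2 + (real n - 2) * (log 2 3 - 3)"
  proof -
    have "log 2 qu = log 2 (1/4) + log 2 ((3/8)^(n-2))" unfolding qu_def by (rule log_mult_pos) simp_all
    also have "log 2 ((3/8::real)^(n-2)) = real (n-2) * log 2 (3/8)" by (simp add: log_nat_power)
    also have "log 2 (3/8::real) = log 2 3 - 3" by (simp add: log_divide log2_8)
    also have "log 2 (1/4::real) = -2" by (simp add: log_divide log2_4)
    also have "real (n-2) = real n - 2" using n by simp
    finally show ?thesis by simp
  qed
  have lU: "log 2 U = (\<alpha> - 1) * (- real n) + (1 - \<alpha>) * (-(real n * (real n + 1) / 2))"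
    unfolding U_def using wpos qlpos by (simp add: log_mult log_powr lw lql)
  have lL: "log 2 L = (\<alpha> - 1) * (- real n) + (1 - \<alpha>) * (-2 + (real n - 2) * (log 2 3 - 3))"
    unfolding L_def using wpos qupos by (simp add: log_mult log_powr lw lqu)
  have hU: "log 2 H \<le> log 2 U" using HU Hpos Upos by simp
  have hL: "log 2 L \<le> log 2 H" using HL Hpos Lpos by simp
  have lp: "log 2 (H powr (1/\<alpha>)) = log 2 H / \<alpha>" by (simp add: log_powr)
  have ap: "\<alpha> > 0" using a by simp
  have up: "log 2 H / \<alpha> \<le> real n * (real n - 1) * ((\<alpha> - 1) / \<alpha>) / 2"
  proof -
    have "log 2 H / \<alpha> \<le> log 2 U / \<alpha>" using hU ap by (simp add: divide_right_mono)
    also have "log 2 U / \<alpha> = real n * (real n - 1) * ((\<alpha> - 1) / \<alpha>) / 2"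
      unfolding lU using ap by (simp add: field_simps)
    finally show ?thesis .
  qed
  have lo: "(real n - 2) * ((\<alpha> - 1) / \<alpha>) / 4 \<le> log 2 H / \<alpha>"
  proof -
    have l43: "2 - log 2 3 \<ge> (1/4::real)" using log2_43 by (simp add: log_divide log2_4)
    have nn: "(real n - 2) * ((\<alpha> - 1) / \<alpha>) \<ge> 0" using n a by simp
    have "(real n - 2) * ((\<alpha> - 1) / \<alpha>) / 4 = (real n - 2) * ((\<alpha> - 1) / \<alpha>) * (1/4)" by simp
    also have "\<dots> \<le> (real n - 2) * ((\<alpha> - 1) / \<alpha>) * (2 - log 2 3)"
      by (rule mult_left_mono[OF l43 nn])
    also have "\<dots> = log 2 L / \<alpha>" unfolding lL using ap by (simp add: field_simps)
    also have "\<dots> \<le> log 2 H / \<alpha>" using hL ap by (simp add: divide_right_mono)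
    finally show ?thesis .
  qed
  show ?thesis unfolding H_def[symmetric] lp using up lo by simp
qed


theorem lemma1:
  fixes \<alpha> :: real
  assumes "\<alpha> \<ge> 1"
  shows "(\<forall>i x. i \<ge> 1 \<and> x \<in> set_pmf (S_law (i - 1)) \<longrightarrow>
            2 powr (((\<alpha> - 1) / \<alpha>) * (-1 + real i * (1 - h2 ((real i + 1) / (2 * real i)))
                 + (1/2) * log 2 ((pi / 2) * ((real i ^ 2 - 1) / real i))))
              \<le> H_div \<alpha> (measure_pmf (cond_step_law i x)) (measure_pmf (S_law i)) powr (1 / \<alpha>)
            \<and> H_div \<alpha> (measure_pmf (cond_step_law i x)) (measure_pmf (S_law i)) powr (1 / \<alpha>)
              \<le> 2 powr (real i * ((\<alpha> - 1) / \<alpha>) - 1 + 1 / \<alpha>))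
       \<and> (\<forall>n::nat. n \<ge> 2 \<longrightarrow>
            (real n - 2) * ((\<alpha> - 1) / \<alpha>) / 4
              \<le> log 2 (H_div \<alpha> (measure_pmf (joint_law n)) (measure_pmf (prod_marg_law n)) powr (1 / \<alpha>))
            \<and> log 2 (H_div \<alpha> (measure_pmf (joint_law n)) (measure_pmf (prod_marg_law n)) powr (1 / \<alpha>))
              \<le> real n * (real n - 1) * ((\<alpha> - 1) / \<alpha>) / 2)"
proof -
  have A: "\<forall>i x. i \<ge> 1 \<and> x \<in> set_pmf (S_law (i - 1)) \<longrightarrow>
            2 powr (((\<alpha> - 1) / \<alpha>) * cexp i)
              \<le> H_div \<alpha> (measure_pmf (cond_step_law i x)) (measure_pmf (S_law i)) powr (1 / \<alpha>)
            \<and> H_div \<alpha> (measure_pmf (cond_step_law i x)) (measure_pmf (S_law i)) powr (1 / \<alpha>)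
              \<le> 2 powr (real i * ((\<alpha> - 1) / \<alpha>) - 1 + 1 / \<alpha>)"
    using part1[OF assms] by blast
  have B: "\<forall>n::nat. n \<ge> 2 \<longrightarrow>
            (real n - 2) * ((\<alpha> - 1) / \<alpha>) / 4
              \<le> log 2 (H_div \<alpha> (measure_pmf (joint_law n)) (measure_pmf (prod_marg_law n)) powr (1 / \<alpha>))
            \<and> log 2 (H_div \<alpha> (measure_pmf (joint_law n)) (measure_pmf (prod_marg_law n)) powr (1 / \<alpha>))
              \<le> real n * (real n - 1) * ((\<alpha> - 1) / \<alpha>) / 2"
    using part2[OF assms] by blast
  show ?thesis using A B unfolding cexp_def by blast
qed

end
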